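(* In the two-state model with $\delta(t)=\tfrac12e^{-t}+\tfrac12e^{-2t}$, $g_1(a)=-a^2$, and $g_2(b)=\frac{193}{144}+\frac56b$ for $b<\frac7{12}$, $g_2(b)=2-(1-b)^2$ for $b\ge\frac7{12}$: (i) $Q^*\sim(5/12,7/12)$ is a weak equilibrium but not a strong equilibrium; indeed, for every $b\in[0,7/12)$ and $Q\sim(5/12,b)$, one has $F(2,Q^* )<F(2,Q\otimes_\varepsilon Q^* )$ for all sufficiently small $\varepsilon>0$. (ii) The equation $2a=\frac12\big(\frac1{1+a}+\frac1{2+a}\big)\big(a^2+\frac{193}{144}\big)$ has a unique solution $\bar a\in[0,\infty)$, it satisfies $2\bar a\ge\frac56$, and $\bar Q^*\sim(\bar a,0)$ is a strong equilibrium.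
   Context: Two-state model: $S=\{1,2\}$, admissible rows unrestricted ($D_i=E_i$), so every admissible generator has the form $Q=\begin{pmatrix}-a&a\\ b&-b\end{pmatrix}$ with $a,b\ge0$, written $Q\sim(a,b)$. The payoff is $f(t,1,(-a,a))=\delta(t)g_1(a)$ and $f(t,2,(b,-b))=\delta(t)g_2(b)$. $X$ is a continuous-time Markov chain with generator $Q$; $F(i,Q)=\mathbb E_{i,Q}[\int_0^\infty f(t,X_t,Q_{X_t})dt]$. $Q\otimes_\varepsilon Q'$: generator $Q$ on $[0,\varepsilon]$, then $Q'$ on $(\varepsilon,\infty)$, with expected payoff $F(i,Q\otimes_\varepsilon Q')$. $Q^*$ is a weak equilibrium if $\liminf_{\varepsilon\downarrow0}\varepsilon^{-1}(F(i,Q^* )-F(i,Q\otimes_\varepsilon Q^* ))\ge0$ for all admissible $Q$ and $i\in S$; a strong equilibrium if for every $i,Q$ there is $\varepsilon>0$ with $F(i,Q^* )\ge F(i,Q\otimes_{\varepsilon'}Q^* )$ for all $0<\varepsilon'\le\varepsilon$. *)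

theory Defs
  imports "HOL-Analysis.Analysis"
begin

text \<open>Two-state model, states 1 and 2 (as naturals).  An admissible generator
  Q = ((-a, a), (b, -b)) with a, b \<ge> 0 is represented by the pair (a, b).\<close>

type_synonym gen = "real \<times> real"

definition admissible :: "gen \<Rightarrow> bool" where
  "admissible Q \<longleftrightarrow> fst Q \<ge> 0 \<and> snd Q \<ge> 0"

definition states :: "nat set" where
  "states = {1, 2}"

text \<open>Transition probabilities P_ij(t) = (exp (t Q))_ij of the continuous-time Markov
  chain with generator Q ~ (a,b).  (When a + b = 0 the chain is constant; the formula
  then gives the identity since x / 0 = 0.)\<close>
definition trans :: "gen \<Rightarrow> real \<Rightarrow> nat \<Rightarrow> nat \<Rightarrow> real" where
  "trans Q t i j =
     (let a = fst Q; b = snd Q; p12 = a * (1 - exp (- (a + b) * t)) / (a + b);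
          p21 = b * (1 - exp (- (a + b) * t)) / (a + b)
      in if i = 1 then (if j = 1 then 1 - p12 else p12)
         else (if j = 1 then p21 else 1 - p21))"

definition rate :: "(real \<Rightarrow> real) \<Rightarrow> (real \<Rightarrow> real) \<Rightarrow> gen \<Rightarrow> nat \<Rightarrow> real" where
  "rate g1 g2 Q j = (if j = 1 then g1 (fst Q) else g2 (snd Q))"

text \<open>F(i,Q) = E_{i,Q}[ \<integral>_0^\<infinity> \<delta>(t) g_{X_t}(Q_{X_t}) dt ].\<close>
definition F :: "(real \<Rightarrow> real) \<Rightarrow> (real \<Rightarrow> real) \<Rightarrow> (real \<Rightarrow> real) \<Rightarrow> nat \<Rightarrow> gen \<Rightarrow> real" where
  "F \<delta> g1 g2 i Q =
     (LBINT t:{0..}. \<delta> t * (\<Sum>j\<in>states. trans Q t i j * rate g1 g2 Q j))"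

text \<open>F(i, Q \<otimes>_\<epsilon> Q'): generator Q on [0,\<epsilon>], then Q' on (\<epsilon>,\<infinity>).\<close>
definition Fsw :: "(real \<Rightarrow> real) \<Rightarrow> (real \<Rightarrow> real) \<Rightarrow> (real \<Rightarrow> real) \<Rightarrow> nat \<Rightarrow> gen \<Rightarrow> real \<Rightarrow> gen \<Rightarrow> real" where
  "Fsw \<delta> g1 g2 i Q \<epsilon> Q' =
     (LBINT t:{0..\<epsilon>}. \<delta> t * (\<Sum>j\<in>states. trans Q t i j * rate g1 g2 Q j))
   + (LBINT t:{\<epsilon><..}. \<delta> t * (\<Sum>k\<in>states. \<Sum>j\<in>states.
          trans Q \<epsilon> i k * trans Q' (t - \<epsilon>) k j * rate g1 g2 Q' j))"

definition weak_eq :: "(real \<Rightarrow> real) \<Rightarrow> (real \<Rightarrow> real) \<Rightarrow> (real \<Rightarrow> real) \<Rightarrow> gen \<Rightarrow> bool" where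
  "weak_eq \<delta> g1 g2 Qs \<longleftrightarrow>
     (\<forall>Q i. admissible Q \<longrightarrow> i \<in> states \<longrightarrow>
        Liminf (at_right 0) (\<lambda>\<epsilon>. ereal ((F \<delta> g1 g2 i Qs - Fsw \<delta> g1 g2 i Q \<epsilon> Qs) / \<epsilon>)) \<ge> 0)"

definition strong_eq :: "(real \<Rightarrow> real) \<Rightarrow> (real \<Rightarrow> real) \<Rightarrow> (real \<Rightarrow> real) \<Rightarrow> gen \<Rightarrow> bool" where
  "strong_eq \<delta> g1 g2 Qs \<longleftrightarrow>
     (\<forall>Q i. admissible Q \<longrightarrow> i \<in> states \<longrightarrow>
        (\<exists>\<epsilon>>0. \<forall>\<epsilon>'. 0 < \<epsilon>' \<and> \<epsilon>' \<le> \<epsilon> \<longrightarrow> F \<delta> g1 g2 i Qs \<ge> Fsw \<delta> g1 g2 i Q \<epsilon>' Qs))"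

end

theory Submission
  imports Defs
begin


lemma exp_Ici:
  fixes \<mu> c :: real
  assumes "\<mu> > 0"
  shows "set_integrable lborel {c..} (\<lambda>x. exp(-\<mu>*x))"
    and "(LBINT x:{c..}. exp(-\<mu>*x)) = exp(-\<mu>*c)/\<mu>"
proof -
  have hi: "((\<lambda>x. exp(-\<mu>*x)) has_integral exp(-\<mu>*c)/\<mu>) {c..}"
    using has_integral_exp_minus_to_infinity[OF assms] by simp
  have "(\<lambda>x. exp(-\<mu>*x)) absolutely_integrable_on {c..}"
    by (rule nonnegative_absolutely_integrable_1) (use hi integrable_on_def in auto)
  then show si: "set_integrable lborel {c..} (\<lambda>x. exp(-\<mu>*x))"
    unfolding set_integrable_def
    by (subst (asm) integrable_completion) auto
  show "(LBINT x:{c..}. exp(-\<mu>*x)) = exp(-\<mu>*c)/\<mu>"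
    using set_borel_integral_eq_integral(2)[OF si] hi integral_unique by metis
qed



definition es :: "(real \<times> real) list \<Rightarrow> real \<Rightarrow> real" where
  "es cs x = (\<Sum>p\<leftarrow>cs. fst p * exp (- snd p * x))"

definition d1 :: "(real \<times> real) list \<Rightarrow> (real \<times> real) list" where
  "d1 cs = map (\<lambda>p. (- fst p * snd p, snd p)) cs"

lemma es_Nil[simp]: "es [] x = 0" by (simp add: es_def)
lemma es_Cons[simp]: "es (p # cs) x = fst p * exp (- snd p * x) + es cs x" by (simp add: es_def)
lemma d1_Nil[simp]: "d1 [] = []" by (simp add: d1_def)
lemma d1_Cons[simp]: "d1 (p # cs) = (- fst p * snd p, snd p) # d1 cs" by (simp add: d1_def)

lemma es_deriv: "(es cs has_real_derivative es (d1 cs) x) (at x)"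
proof (induction cs)
  case Nil
  then show ?case by simp
next
  case (Cons p cs)
  show ?case
    unfolding es_Cons d1_Cons
    by (rule derivative_eq_intros Cons refl | simp)+
qed

lemma es_isCont: "isCont (es cs) x"
  using es_deriv DERIV_isCont by blast

lemma es_pos:
  assumes h0: "es cs 0 = 0" and h1: "es (d1 cs) 0 = 0" and h2: "es (d1 (d1 cs)) 0 > 0"
  shows "eventually (\<lambda>x. es cs x > 0) (at_right 0)"
proof -
  have "eventually (\<lambda>y. es (d1 (d1 cs)) y > 0) (at 0)"
    using es_isCont[where cs="d1 (d1 cs)" and x=0] h2 unfolding isCont_def
    by (rule order_tendstoD(1))
  then obtain d where d: "d > 0" "\<And>y. y \<noteq> 0 \<Longrightarrow> dist y 0 < d \<Longrightarrow> es (d1 (d1 cs)) y > 0"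
    unfolding eventually_at by blast
  have pos2: "es (d1 (d1 cs)) y > 0" if "0 \<le> y" "y < d" for y
    using d h2 that by (cases "y = 0") auto
  have pos1: "es (d1 cs) y > 0" if "0 < y" "y < d" for y
  proof -
    obtain z where z: "0 < z" "z < y" "es (d1 cs) y - es (d1 cs) 0 = (y - 0) * es (d1 (d1 cs)) z"
      using MVT2[OF \<open>0 < y\<close>, of "es (d1 cs)" "es (d1 (d1 cs))"] es_deriv by blast
    have "es (d1 (d1 cs)) z > 0" using pos2 z that by auto
    then show ?thesis using z h1 that by simp
  qed
  have "es cs y > 0" if "0 < y" "y < d" for y
  proof -
    obtain z where z: "0 < z" "z < y" "es cs y - es cs 0 = (y - 0) * es (d1 cs) z"
      using MVT2[OF \<open>0 < y\<close>, of "es cs" "es (d1 cs)"] es_deriv by blast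
    have "es (d1 cs) z > 0" using pos1 z that by auto
    then show ?thesis using z h0 that by simp
  qed
  then show ?thesis
    unfolding eventually_at_right_field using d(1) by blast
qed

lemma es_lim:
  assumes h0: "es cs 0 = 0"
  shows "((\<lambda>x. es cs x / x) \<longlongrightarrow> es (d1 cs) 0) (at_right 0)"
proof -
  have "((\<lambda>x. (es cs x - es cs 0) / (x - 0)) \<longlongrightarrow> es (d1 cs) 0) (at 0)"
    using es_deriv[of cs 0] unfolding DERIV_def by simp
  then have "((\<lambda>x. es cs x / x) \<longlongrightarrow> es (d1 cs) 0) (at 0)"
    using h0 by simp
  then show ?thesis by (rule filterlim_mono) (simp_all add: at_le)
qed



lemma exp_Ioi:
  fixes \<mu> c :: real
  assumes "\<mu> > 0"
  shows "set_integrable lborel {c<..} (\<lambda>x. exp(-\<mu>*x))"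
    and "(LBINT x:{c<..}. exp(-\<mu>*x)) = exp(-\<mu>*c)/\<mu>"
proof -
  show "set_integrable lborel {c<..} (\<lambda>x. exp(-\<mu>*x))"
    by (rule set_integrable_subset[OF exp_Ici(1)[OF assms, of c]]) auto
  have "(LBINT x:{c<..}. exp(-\<mu>*x)) = (LBINT x:{c..}. exp(-\<mu>*x))"
    by (rule set_integral_discrete_difference[where X="{c}"]) auto
  then show "(LBINT x:{c<..}. exp(-\<mu>*x)) = exp(-\<mu>*c)/\<mu>"
    using exp_Ici(2)[OF assms] by simp
qed

lemma exp_Icc:
  fixes \<mu> c e :: real
  assumes "\<mu> > 0" "c \<le> e"
  shows "set_integrable lborel {c..e} (\<lambda>x. exp(-\<mu>*x))"
    and "(LBINT x:{c..e}. exp(-\<mu>*x)) = exp(-\<mu>*c)/\<mu> - exp(-\<mu>*e)/\<mu>"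
proof -
  show i1: "set_integrable lborel {c..e} (\<lambda>x. exp(-\<mu>*x))"
    by (rule set_integrable_subset[OF exp_Ici(1)[OF assms(1), of c]]) auto
  have eq: "{c..} = {c..e} \<union> {e<..}" using assms by auto
  have "(LBINT x:{c..}. exp(-\<mu>*x)) = (LBINT x:{c..e} \<union> {e<..}. exp(-\<mu>*x))"
    by (simp only: eq)
  also have "\<dots> = (LBINT x:{c..e}. exp(-\<mu>*x)) + (LBINT x:{e<..}. exp(-\<mu>*x))"
    by (rule set_integral_Un[OF _ i1 exp_Ioi(1)[OF assms(1), of e]]) auto
  finally have "(LBINT x:{c..}. exp(-\<mu>*x)) = (LBINT x:{c..e}. exp(-\<mu>*x)) + (LBINT x:{e<..}. exp(-\<mu>*x))" .
  then show "(LBINT x:{c..e}. exp(-\<mu>*x)) = exp(-\<mu>*c)/\<mu> - exp(-\<mu>*e)/\<mu>"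
    using exp_Ici(2)[OF assms(1)] exp_Ioi(2)[OF assms(1)] by simp
qed

lemma comb4:
  fixes A :: "real set"
  assumes I1: "set_integrable lborel A (\<lambda>x. exp(-ma*x))"
    and I2: "set_integrable lborel A (\<lambda>x. exp(-mb*x))"
    and I3: "set_integrable lborel A (\<lambda>x. exp(-mc*x))"
    and I4: "set_integrable lborel A (\<lambda>x. exp(-md*x))"
  shows "set_integrable lborel A (\<lambda>x. c1*exp(-ma*x) + c2*exp(-mb*x) + c3*exp(-mc*x) + c4*exp(-md*x))"
    and "(LBINT x:A. c1*exp(-ma*x) + c2*exp(-mb*x) + c3*exp(-mc*x) + c4*exp(-md*x))
        = c1*(LBINT x:A. exp(-ma*x)) + c2*(LBINT x:A. exp(-mb*x)) + c3*(LBINT x:A. exp(-mc*x)) + c4*(LBINT x:A. exp(-md*x))"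
proof -
  note i = set_integrable_mult_right[OF I1] set_integrable_mult_right[OF I2]
     set_integrable_mult_right[OF I3] set_integrable_mult_right[OF I4]
  show "set_integrable lborel A (\<lambda>x. c1*exp(-ma*x) + c2*exp(-mb*x) + c3*exp(-mc*x) + c4*exp(-md*x))"
    by (intro set_integral_add(1) i)
  show "(LBINT x:A. c1*exp(-ma*x) + c2*exp(-mb*x) + c3*exp(-mc*x) + c4*exp(-md*x))
        = c1*(LBINT x:A. exp(-ma*x)) + c2*(LBINT x:A. exp(-mb*x)) + c3*(LBINT x:A. exp(-mc*x)) + c4*(LBINT x:A. exp(-md*x))"
    by (subst set_integral_add, (intro set_integral_add(1) i)+)+ (simp add: I1 I2 I3 I4)
qed

definition dl :: "real \<Rightarrow> real" where "dl t = exp (- t) / 2 + exp (- 2 * t) / 2"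

definition Lf :: "real \<Rightarrow> real" where "Lf s = 1/(2*(1+s)) + 1/(2*(2+s))"

definition K0 :: "real \<Rightarrow> real \<Rightarrow> real \<Rightarrow> real" where
  "K0 \<alpha> \<beta> s = 3/4*\<alpha> + \<beta> * Lf s"
definition K1 :: "real \<Rightarrow> real \<Rightarrow> real \<Rightarrow> real \<Rightarrow> real" where
  "K1 \<alpha> \<beta> s e = \<alpha>*(3/4 - exp(-e)/2 - exp(-2*e)/4)
     + \<beta>*((1 - exp(-(1+s)*e))/(2*(1+s)) + (1 - exp(-(2+s)*e))/(2*(2+s)))"
definition K2 :: "real \<Rightarrow> real \<Rightarrow> real \<Rightarrow> real \<Rightarrow> real" where
  "K2 \<alpha> \<beta> s e = \<alpha>*(exp(-e)/2 + exp(-2*e)/4) + \<beta>*(exp(-e)/(2*(1+s)) + exp(-2*e)/(2*(2+s)))"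

lemma dl_expand:
  "dl t * (\<alpha> + \<beta>*exp(-s*t)) = \<alpha>/2*exp(-1*t) + \<alpha>/2*exp(-2*t) + \<beta>/2*exp(-(1+s)*t) + \<beta>/2*exp(-(2+s)*t)"
proof -
  have "exp(-(1+s)*t) = exp(-t)*exp(-s*t)" "exp(-(2+s)*t) = exp(-2*t)*exp(-s*t)"
    by (simp_all add: mult_exp_exp algebra_simps)
  then show ?thesis by (simp add: dl_def algebra_simps)
qed

lemma dl_expand2:
  "dl t * (\<alpha> + \<beta>*exp(-s*(t-e))) = \<alpha>/2*exp(-1*t) + \<alpha>/2*exp(-2*t)
     + \<beta>*exp(s*e)/2*exp(-(1+s)*t) + \<beta>*exp(s*e)/2*exp(-(2+s)*t)"
proof -
  have "exp(-s*(t-e)) = exp(s*e)*exp(-s*t)" by (simp add: mult_exp_exp algebra_simps)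
  then show ?thesis using dl_expand[of t \<alpha> "\<beta>*exp(s*e)" s] by (simp add: algebra_simps)
qed

lemma L0:
  assumes "s \<ge> 0"
  shows "set_integrable lborel {0..} (\<lambda>t. dl t * (\<alpha> + \<beta>*exp(-s*t)))"
    and "(LBINT t:{0..}. dl t * (\<alpha> + \<beta>*exp(-s*t))) = K0 \<alpha> \<beta> s"
proof -
  have p: "(1::real) > 0" "(2::real) > 0" "1+s > 0" "2+s>0" using assms by auto
  have I: "\<And>\<mu>::real. \<mu> > 0 \<Longrightarrow> set_integrable lborel {0..} (\<lambda>x. exp(-\<mu>*x))" using exp_Ici(1) by blast
  note c = comb4[OF I[OF p(1)] I[OF p(2)] I[OF p(3)] I[OF p(4)]]
  show "set_integrable lborel {0..} (\<lambda>t. dl t * (\<alpha> + \<beta>*exp(-s*t)))"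
    apply (simp only: dl_expand) by (rule c)
  show "(LBINT t:{0..}. dl t * (\<alpha> + \<beta>*exp(-s*t))) = K0 \<alpha> \<beta> s"
    apply (simp only: dl_expand)
    apply (subst c(2))
    apply (simp only: exp_Ici(2)[OF p(1)] exp_Ici(2)[OF p(2)] exp_Ici(2)[OF p(3)] exp_Ici(2)[OF p(4)])
    by (simp add: K0_def Lf_def algebra_simps)
qed

lemma L1:
  assumes "s \<ge> 0" "e \<ge> 0"
  shows "(LBINT t:{0..e}. dl t * (\<alpha> + \<beta>*exp(-s*t))) = K1 \<alpha> \<beta> s e"
proof -
  have p: "(1::real) > 0" "(2::real) > 0" "1+s > 0" "2+s>0" using assms by auto
  have I: "\<And>\<mu>::real. \<mu> > 0 \<Longrightarrow> set_integrable lborel {0..e} (\<lambda>x. exp(-\<mu>*x))" using exp_Icc(1) assms by blast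
  note c = comb4[OF I[OF p(1)] I[OF p(2)] I[OF p(3)] I[OF p(4)]]
  show ?thesis
    apply (simp only: dl_expand)
    apply (subst c(2))
    apply (simp only: exp_Icc(2)[OF p(1) assms(2)] exp_Icc(2)[OF p(2) assms(2)]
       exp_Icc(2)[OF p(3) assms(2)] exp_Icc(2)[OF p(4) assms(2)])
    by (simp add: K1_def algebra_simps diff_divide_distrib)
qed

lemma L2:
  assumes "s \<ge> 0"
  shows "(LBINT t:{e<..}. dl t * (\<alpha> + \<beta>*exp(-s*(t-e)))) = K2 \<alpha> \<beta> s e"
proof -
  have p: "(1::real) > 0" "(2::real) > 0" "1+s > 0" "2+s>0" using assms by auto
  have I: "\<And>\<mu>::real. \<mu> > 0 \<Longrightarrow> set_integrable lborel {e<..} (\<lambda>x. exp(-\<mu>*x))" using exp_Ioi(1) by blast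
  note c = comb4[OF I[OF p(1)] I[OF p(2)] I[OF p(3)] I[OF p(4)]]
  have x1: "\<beta>*exp(s*e)/2*(exp(-(1+s)*e)/(1+s)) = \<beta>/2*(exp(-1*e)/(1+s))"
     "\<beta>*exp(s*e)/2*(exp(-(2+s)*e)/(2+s)) = \<beta>/2*(exp(-2*e)/(2+s))"
    by (simp_all add: mult_exp_exp algebra_simps)
  show ?thesis
    apply (simp only: dl_expand2)
    apply (subst c(2))
    apply (simp only: exp_Ioi(2)[OF p(1)] exp_Ioi(2)[OF p(2)] exp_Ioi(2)[OF p(3)] exp_Ioi(2)[OF p(4)])
    unfolding x1 by (simp add: K2_def algebra_simps)
qed



definition pu :: "gen \<Rightarrow> nat \<Rightarrow> real" where
  "pu Q i = (if i = 1 then fst Q else snd Q) / (fst Q + snd Q)"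
definition dv :: "nat \<Rightarrow> (nat \<Rightarrow> real) \<Rightarrow> real" where
  "dv i x = (if i = 1 then x 2 - x 1 else x 1 - x 2)"

lemma trans_sum:
  assumes "i \<in> states"
  shows "(\<Sum>k\<in>states. trans Q t i k * x k)
     = (x i + pu Q i * dv i x) - pu Q i * dv i x * exp(-(fst Q + snd Q)*t)"
  using assms
  by (auto simp: states_def trans_def Let_def pu_def dv_def algebra_simps diff_divide_distrib)

definition al :: "(real\<Rightarrow>real) \<Rightarrow> (real\<Rightarrow>real) \<Rightarrow> gen \<Rightarrow> nat \<Rightarrow> real" where
  "al g1 g2 Q i = rate g1 g2 Q i + pu Q i * dv i (rate g1 g2 Q)"
definition be :: "(real\<Rightarrow>real) \<Rightarrow> (real\<Rightarrow>real) \<Rightarrow> gen \<Rightarrow> nat \<Rightarrow> real" where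
  "be g1 g2 Q i = - pu Q i * dv i (rate g1 g2 Q)"

lemma rate_sum:
  assumes "i \<in> states"
  shows "(\<Sum>j\<in>states. trans Q t i j * rate g1 g2 Q j)
     = al g1 g2 Q i + be g1 g2 Q i * exp(-(fst Q + snd Q)*t)"
  unfolding trans_sum[OF assms] al_def be_def by simp

lemma F_rep:
  assumes "admissible Q" "i \<in> states"
  shows "F dl g1 g2 i Q = K0 (al g1 g2 Q i) (be g1 g2 Q i) (fst Q + snd Q)"
proof -
  have s: "fst Q + snd Q \<ge> 0" using assms(1) by (simp add: admissible_def)
  have "F dl g1 g2 i Q = (LBINT t:{0..}. dl t * (al g1 g2 Q i + be g1 g2 Q i * exp(-(fst Q + snd Q)*t)))"
    unfolding F_def rate_sum[OF assms(2)] ..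
  also have "\<dots> = K0 (al g1 g2 Q i) (be g1 g2 Q i) (fst Q + snd Q)"
    by (rule L0(2)[OF s])
  finally show ?thesis .
qed

lemma Fsw_rep:
  assumes "admissible Q" "admissible Q'" "i \<in> states" "e \<ge> 0"
  shows "Fsw dl g1 g2 i Q e Q' = K1 (al g1 g2 Q i) (be g1 g2 Q i) (fst Q + snd Q) e
     + K2 ((\<Sum>k\<in>states. trans Q e i k * al g1 g2 Q' k)) ((\<Sum>k\<in>states. trans Q e i k * be g1 g2 Q' k))
          (fst Q' + snd Q') e"
proof -
  have s: "fst Q + snd Q \<ge> 0" "fst Q' + snd Q' \<ge> 0" using assms(1,2) by (auto simp add: admissible_def)
  have 1: "(LBINT t:{0..e}. dl t * (\<Sum>j\<in>states. trans Q t i j * rate g1 g2 Q j))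
      = K1 (al g1 g2 Q i) (be g1 g2 Q i) (fst Q + snd Q) e"
    unfolding rate_sum[OF assms(3)] by (rule L1[OF s(1) assms(4)])
  have eq: "(\<Sum>k\<in>states. \<Sum>j\<in>states. trans Q e i k * trans Q' (t - e) k j * rate g1 g2 Q' j)
     = (\<Sum>k\<in>states. trans Q e i k * al g1 g2 Q' k) + (\<Sum>k\<in>states. trans Q e i k * be g1 g2 Q' k)
        * exp(-(fst Q' + snd Q')*(t-e))" for t
  proof -
    have "(\<Sum>k\<in>states. \<Sum>j\<in>states. trans Q e i k * trans Q' (t - e) k j * rate g1 g2 Q' j)
       = (\<Sum>k\<in>states. trans Q e i k * (\<Sum>j\<in>states. trans Q' (t - e) k j * rate g1 g2 Q' j))"
      by (simp add: sum_distrib_left mult.assoc)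
    also have "\<dots> = (\<Sum>k\<in>states. trans Q e i k * (al g1 g2 Q' k + be g1 g2 Q' k * exp(-(fst Q' + snd Q')*(t-e))))"
      by (intro sum.cong refl) (simp add: rate_sum)
    also have "\<dots> = (\<Sum>k\<in>states. trans Q e i k * al g1 g2 Q' k) + (\<Sum>k\<in>states. trans Q e i k * be g1 g2 Q' k)
        * exp(-(fst Q' + snd Q')*(t-e))"
      by (simp add: sum_distrib_right sum.distrib algebra_simps)
    finally show ?thesis .
  qed
  have 2: "(LBINT t:{e<..}. dl t * (\<Sum>k\<in>states. \<Sum>j\<in>states. trans Q e i k * trans Q' (t - e) k j * rate g1 g2 Q' j))
     = K2 ((\<Sum>k\<in>states. trans Q e i k * al g1 g2 Q' k)) ((\<Sum>k\<in>states. trans Q e i k * be g1 g2 Q' k))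
          (fst Q' + snd Q') e"
    unfolding eq by (rule L2[OF s(2)])
  show ?thesis unfolding Fsw_def 1 2 ..
qed

definition Mf :: "real \<Rightarrow> real" where "Mf s = 1/(2*(1+s)) + 1/(2+s)"
definition Nf :: "real \<Rightarrow> real" where "Nf s = 1/(2*(1+s)) + 2/(2+s)"

definition cs :: "real \<Rightarrow> real \<Rightarrow> real \<Rightarrow> real \<Rightarrow> real \<Rightarrow> real \<Rightarrow> real \<Rightarrow> real \<Rightarrow> real \<Rightarrow> (real \<times> real) list" where
  "cs \<alpha> \<beta> s A0 A1 B0 B1 s' F' =
    [(3/4*\<alpha> + \<beta>*Lf s - F', 0),
     (-\<alpha>/2 + A0/2 + B0/(2*(1+s')), 1),
     (-\<alpha>/4 + A0/4 + B0/(2*(2+s')), 2),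
     (-\<beta>/(2*(1+s)) - A1/2 - B1/(2*(1+s')), 1+s),
     (-\<beta>/(2*(2+s)) - A1/4 - B1/(2*(2+s')), 2+s)]"

lemma alg_1:
  fixes p q r1 r2 s :: real
  assumes "p \<noteq> 0" "q \<noteq> 0" "r1 \<noteq> 0" "r2 \<noteq> 0" "p = 1 + s" "q = 2 + s"
  shows "- ((-\<alpha>/2 + A0/2 + B0/(2*r1))*1 + (-\<alpha>/4 + A0/4 + B0/(2*r2))*2
          + (-\<beta>/(2*p) - A1/2 - B1/(2*r1))*p + (-\<beta>/(2*q) - A1/4 - B1/(2*r2))*q)
    = (\<alpha>+\<beta>) - (A0-A1) - (1/(2*r1) + 1/r2) * (B0-B1) + s*(3/4*A1 + (1/(2*r1) + 1/(2*r2)) * B1)"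
  using assms(1-4) apply (simp add: field_simps)
  using assms(5,6) apply (simp add: algebra_simps)
  done

lemma alg_2:
  fixes p q r1 r2 s :: real
  assumes "p \<noteq> 0" "q \<noteq> 0" "r1 \<noteq> 0" "r2 \<noteq> 0" "p = 1 + s" "q = 2 + s"
  shows "((-\<alpha>/2 + A0/2 + B0/(2*r1))*1 + (-\<alpha>/4 + A0/4 + B0/(2*r2))*4
          + (-\<beta>/(2*p) - A1/2 - B1/(2*r1))*p^2 + (-\<beta>/(2*q) - A1/4 - B1/(2*r2))*q^2)
    = -3/2*(\<alpha>+\<beta>) - s*\<beta> + 3/2*(A0-A1) + (1/(2*r1) + 2/r2) * (B0-B1) - s*(2*A1 + 2*(1/(2*r1) + 1/r2) * B1)
      - s^2*(3/4*A1 + (1/(2*r1) + 1/(2*r2)) * B1)"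
  using assms(1-4) apply (simp add: field_simps power2_eq_square)
  using assms(5,6) apply (simp add: algebra_simps)
  done

lemma alg_0:
  fixes p q r1 r2 s :: real
  assumes "p \<noteq> 0" "q \<noteq> 0" "r1 \<noteq> 0" "r2 \<noteq> 0"
  shows "(3/4*\<alpha> + \<beta>*(1/(2*p) + 1/(2*q)) - F') + (-\<alpha>/2 + A0/2 + B0/(2*r1)) + (-\<alpha>/4 + A0/4 + B0/(2*r2))
          + (-\<beta>/(2*p) - A1/2 - B1/(2*r1)) + (-\<beta>/(2*q) - A1/4 - B1/(2*r2))
    = 3/4*(A0-A1) + (B0-B1)*(1/(2*r1) + 1/(2*r2)) - F'"
  using assms(1-4) by (simp add: field_simps)

lemma alg_K:
  fixes p q r1 r2 s :: real
  assumes "p \<noteq> 0" "q \<noteq> 0" "r1 \<noteq> 0" "r2 \<noteq> 0"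
  shows "\<alpha>*(3/4 - E1/2 - E2/4) + \<beta>*((1 - E1*Es)/(2*p) + (1 - E2*Es)/(2*q))
     + ((A0 - A1*Es)*(E1/2 + E2/4) + (B0 - B1*Es)*(E1/(2*r1) + E2/(2*r2))) - F'
   = (3/4*\<alpha> + \<beta>*(1/(2*p) + 1/(2*q)) - F') + (-\<alpha>/2 + A0/2 + B0/(2*r1))*E1 + (-\<alpha>/4 + A0/4 + B0/(2*r2))*E2
      + (-\<beta>/(2*p) - A1/2 - B1/(2*r1))*(E1*Es) + (-\<beta>/(2*q) - A1/4 - B1/(2*r2))*(E2*Es)"
  using assms(1-4) by (simp add: field_simps)

lemma es5: "es [(c0,0),(c1,1),(c2,2),(c3,l3),(c4,l4)] 0 = c0 + c1 + c2 + c3 + c4"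
  by (simp add: algebra_simps)
lemma es5_1: "es (d1 [(c0,0),(c1,1),(c2,2),(c3,l3),(c4,l4)]) 0 = - (c1*1 + c2*2 + c3*l3 + c4*l4)"
  by (simp add: algebra_simps)
lemma es5_2: "es (d1 (d1 [(c0,0),(c1,1),(c2,2),(c3,l3),(c4,l4)])) 0 = c1*1 + c2*4 + c3*l3^2 + c4*l4^2"
  by (simp add: algebra_simps power2_eq_square)

lemma K_es:
  assumes "s \<ge> 0" "s' \<ge> 0"
  shows "K1 \<alpha> \<beta> s e + K2 (A0 - A1*exp(-s*e)) (B0 - B1*exp(-s*e)) s' e - F'
     = es (cs \<alpha> \<beta> s A0 A1 B0 B1 s' F') e"
proof -
  have x: "exp(-(1+s)*e) = exp(-e)*exp(-s*e)" "exp(-(2+s)*e) = exp(-2*e)*exp(-s*e)"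
    by (simp_all add: mult_exp_exp algebra_simps)
  have p: "1+s \<noteq> 0" "2+s \<noteq> 0" "1+s' \<noteq> 0" "2+s' \<noteq> 0" using assms by auto
  have "K1 \<alpha> \<beta> s e + K2 (A0 - A1*exp(-s*e)) (B0 - B1*exp(-s*e)) s' e - F'
     = \<alpha>*(3/4 - exp(-e)/2 - exp(-2*e)/4) + \<beta>*((1 - exp(-e)*exp(-s*e))/(2*(1+s)) + (1 - exp(-2*e)*exp(-s*e))/(2*(2+s)))
     + ((A0 - A1*exp(-s*e))*(exp(-e)/2 + exp(-2*e)/4) + (B0 - B1*exp(-s*e))*(exp(-e)/(2*(1+s')) + exp(-2*e)/(2*(2+s')))) - F'"
    by (simp only: K1_def K2_def x)
  also have "\<dots> = (3/4*\<alpha> + \<beta>*(1/(2*(1+s)) + 1/(2*(2+s))) - F') + (-\<alpha>/2 + A0/2 + B0/(2*(1+s')))*exp(-e)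
      + (-\<alpha>/4 + A0/4 + B0/(2*(2+s')))*exp(-2*e)
      + (-\<beta>/(2*(1+s)) - A1/2 - B1/(2*(1+s')))*(exp(-e)*exp(-s*e))
      + (-\<beta>/(2*(2+s)) - A1/4 - B1/(2*(2+s')))*(exp(-2*e)*exp(-s*e))"
    by (rule alg_K[OF p])
  also have "\<dots> = es (cs \<alpha> \<beta> s A0 A1 B0 B1 s' F') e"
    by (simp only: cs_def es_Cons es_Nil fst_conv snd_conv x) (simp add: Lf_def algebra_simps)
  finally show ?thesis .
qed

lemma cs_0:
  assumes "s \<ge> 0" "s' \<ge> 0"
  shows "es (cs \<alpha> \<beta> s A0 A1 B0 B1 s' F') 0 = K0 (A0-A1) (B0-B1) s' - F'"
proof -
  have p: "1+s \<noteq> 0" "2+s \<noteq> 0" "1+s' \<noteq> 0" "2+s' \<noteq> 0" using assms by auto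
  have "es (cs \<alpha> \<beta> s A0 A1 B0 B1 s' F') 0 = (3/4*\<alpha> + \<beta>*(1/(2*(1+s)) + 1/(2*(2+s))) - F') + (-\<alpha>/2 + A0/2 + B0/(2*(1+s'))) + (-\<alpha>/4 + A0/4 + B0/(2*(2+s')))
          + (-\<beta>/(2*(1+s)) - A1/2 - B1/(2*(1+s'))) + (-\<beta>/(2*(2+s)) - A1/4 - B1/(2*(2+s')))"
    unfolding cs_def es5 Lf_def ..
  also have "\<dots> = 3/4*(A0-A1) + (B0-B1)*(1/(2*(1+s')) + 1/(2*(2+s'))) - F'"
    by (rule alg_0[OF p])
  finally show ?thesis by (simp add: K0_def Lf_def algebra_simps)
qed

lemma cs_1:
  assumes "s \<ge> 0" "s' \<ge> 0"
  shows "es (d1 (cs \<alpha> \<beta> s A0 A1 B0 B1 s' F')) 0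
    = (\<alpha>+\<beta>) - (A0-A1) - Mf s' * (B0-B1) + s*(3/4*A1 + Lf s' * B1)"
proof -
  have p: "1+s \<noteq> 0" "2+s \<noteq> 0" "1+s' \<noteq> 0" "2+s' \<noteq> 0" using assms by auto
  have "es (d1 (cs \<alpha> \<beta> s A0 A1 B0 B1 s' F')) 0 = - ((-\<alpha>/2 + A0/2 + B0/(2*(1+s')))*1 + (-\<alpha>/4 + A0/4 + B0/(2*(2+s')))*2
          + (-\<beta>/(2*(1+s)) - A1/2 - B1/(2*(1+s')))*(1+s) + (-\<beta>/(2*(2+s)) - A1/4 - B1/(2*(2+s')))*(2+s))"
    unfolding cs_def es5_1 ..
  also have "\<dots> = (\<alpha>+\<beta>) - (A0-A1) - (1/(2*(1+s')) + 1/(2+s')) * (B0-B1) + s*(3/4*A1 + (1/(2*(1+s')) + 1/(2*(2+s'))) * B1)"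
    by (rule alg_1[OF p refl refl])
  finally show ?thesis by (simp add: Mf_def Lf_def)
qed

lemma cs_2:
  assumes "s \<ge> 0" "s' \<ge> 0"
  shows "es (d1 (d1 (cs \<alpha> \<beta> s A0 A1 B0 B1 s' F'))) 0
    = -3/2*(\<alpha>+\<beta>) - s*\<beta> + 3/2*(A0-A1) + Nf s' * (B0-B1) - s*(2*A1 + 2*Mf s' * B1)
      - s^2*(3/4*A1 + Lf s' * B1)"
proof -
  have p: "1+s \<noteq> 0" "2+s \<noteq> 0" "1+s' \<noteq> 0" "2+s' \<noteq> 0" using assms by auto
  have "es (d1 (d1 (cs \<alpha> \<beta> s A0 A1 B0 B1 s' F'))) 0 = ((-\<alpha>/2 + A0/2 + B0/(2*(1+s')))*1 + (-\<alpha>/4 + A0/4 + B0/(2*(2+s')))*4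
          + (-\<beta>/(2*(1+s)) - A1/2 - B1/(2*(1+s')))*(1+s)^2 + (-\<beta>/(2*(2+s)) - A1/4 - B1/(2*(2+s')))*(2+s)^2)"
    unfolding cs_def es5_2 ..
  also have "\<dots> = -3/2*(\<alpha>+\<beta>) - s*\<beta> + 3/2*(A0-A1) + (1/(2*(1+s')) + 2/(2+s')) * (B0-B1) - s*(2*A1 + 2*(1/(2*(1+s')) + 1/(2+s')) * B1)
      - s^2*(3/4*A1 + (1/(2*(1+s')) + 1/(2*(2+s'))) * B1)"
    by (rule alg_2[OF p refl refl])
  finally show ?thesis by (simp add: Mf_def Lf_def Nf_def)
qed



definition qv :: "gen \<Rightarrow> nat \<Rightarrow> real" where "qv Q i = (if i = 1 then fst Q else snd Q)"

lemma s_pu: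
  assumes "admissible Q"
  shows "qv Q i = (fst Q + snd Q) * pu Q i"
  using assms unfolding admissible_def qv_def pu_def by (auto simp: add_nonneg_eq_0_iff)

definition CS :: "(real\<Rightarrow>real) \<Rightarrow> (real\<Rightarrow>real) \<Rightarrow> gen \<Rightarrow> nat \<Rightarrow> gen \<Rightarrow> (real \<times> real) list" where
  "CS g1 g2 Q i Q' = cs (al g1 g2 Q i) (be g1 g2 Q i) (fst Q + snd Q)
     (al g1 g2 Q' i + pu Q i * dv i (al g1 g2 Q')) (pu Q i * dv i (al g1 g2 Q'))
     (be g1 g2 Q' i + pu Q i * dv i (be g1 g2 Q')) (pu Q i * dv i (be g1 g2 Q'))
     (fst Q' + snd Q') (F dl g1 g2 i Q')"

definition D1 :: "(real\<Rightarrow>real) \<Rightarrow> (real\<Rightarrow>real) \<Rightarrow> gen \<Rightarrow> nat \<Rightarrow> gen \<Rightarrow> real" where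
  "D1 g1 g2 Q i Q' = rate g1 g2 Q i - al g1 g2 Q' i - Mf (fst Q' + snd Q') * be g1 g2 Q' i
     + qv Q i * (3/4 * dv i (al g1 g2 Q') + Lf (fst Q' + snd Q') * dv i (be g1 g2 Q'))"

definition D2 :: "(real\<Rightarrow>real) \<Rightarrow> (real\<Rightarrow>real) \<Rightarrow> gen \<Rightarrow> nat \<Rightarrow> gen \<Rightarrow> real" where
  "D2 g1 g2 Q i Q' = -3/2 * rate g1 g2 Q i + qv Q i * dv i (rate g1 g2 Q) + 3/2 * al g1 g2 Q' i
     + Nf (fst Q' + snd Q') * be g1 g2 Q' i
     - qv Q i * (2 * dv i (al g1 g2 Q') + 2 * Mf (fst Q' + snd Q') * dv i (be g1 g2 Q'))
     - (fst Q + snd Q) * qv Q i * (3/4 * dv i (al g1 g2 Q') + Lf (fst Q' + snd Q') * dv i (be g1 g2 Q'))"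

lemma h_rep:
  assumes "admissible Q" "admissible Q'" "i \<in> states" "e \<ge> 0"
  shows "Fsw dl g1 g2 i Q e Q' - F dl g1 g2 i Q' = es (CS g1 g2 Q i Q') e"
proof -
  have s: "fst Q + snd Q \<ge> 0" "fst Q' + snd Q' \<ge> 0" using assms(1,2) by (auto simp add: admissible_def)
  show ?thesis
    unfolding Fsw_rep[OF assms] trans_sum[OF assms(3)] CS_def
    by (rule K_es[OF s])
qed

lemma h_0:
  assumes "admissible Q" "admissible Q'" "i \<in> states"
  shows "es (CS g1 g2 Q i Q') 0 = 0"
proof -
  have s: "fst Q + snd Q \<ge> 0" "fst Q' + snd Q' \<ge> 0" using assms(1,2) by (auto simp add: admissible_def)
  show ?thesis unfolding CS_def cs_0[OF s] F_rep[OF assms(2,3)] by simp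
qed

lemma h_1:
  assumes "admissible Q" "admissible Q'" "i \<in> states"
  shows "es (d1 (CS g1 g2 Q i Q')) 0 = D1 g1 g2 Q i Q'"
proof -
  have s: "fst Q + snd Q \<ge> 0" "fst Q' + snd Q' \<ge> 0" using assms(1,2) by (auto simp add: admissible_def)
  have sp: "qv Q i = (fst Q + snd Q) * pu Q i" by (rule s_pu[OF assms(1)])
  show ?thesis unfolding CS_def cs_1[OF s] D1_def sp
    by (simp add: al_def be_def algebra_simps)
qed

lemma h_2:
  assumes "admissible Q" "admissible Q'" "i \<in> states"
  shows "es (d1 (d1 (CS g1 g2 Q i Q'))) 0 = D2 g1 g2 Q i Q'"
proof -
  have s: "fst Q + snd Q \<ge> 0" "fst Q' + snd Q' \<ge> 0" using assms(1,2) by (auto simp add: admissible_def)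
  have sp: "qv Q i = (fst Q + snd Q) * pu Q i" by (rule s_pu[OF assms(1)])
  show ?thesis unfolding CS_def cs_2[OF s] D2_def sp
    by (simp add: al_def be_def algebra_simps power2_eq_square)
qed

lemma es_neg:
  assumes "es ws 0 = 0" "es (d1 ws) 0 < 0"
  shows "eventually (\<lambda>x. es ws x < 0) (at_right 0)"
proof -
  have "eventually (\<lambda>x. es ws x / x < 0) (at_right 0)"
    using es_lim[OF assms(1)] assms(2) by (rule order_tendstoD(2))
  then show ?thesis using eventually_at_right_less[of "0::real"]
    by eventually_elim (simp add: divide_less_0_iff)
qed

lemma es_neg2:
  assumes "es ws 0 = 0" "es (d1 ws) 0 = 0" "es (d1 (d1 ws)) 0 < 0"
  shows "eventually (\<lambda>x. es ws x < 0) (at_right 0)"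
proof -
  have m: "es (map (\<lambda>p. (- fst p, snd p)) ws) x = - es ws x" for ws x
    by (induction ws) auto
  have md: "d1 (map (\<lambda>p. (- fst p, snd p)) ws) = map (\<lambda>p. (- fst p, snd p)) (d1 ws)" for ws
    by (induction ws) auto
  have "eventually (\<lambda>x. es (map (\<lambda>p. (- fst p, snd p)) ws) x > 0) (at_right 0)"
    by (rule es_pos) (use assms in \<open>simp_all add: m md\<close>)
  then show ?thesis by (simp add: m)
qed



definition G1 :: "real \<Rightarrow> real" where "G1 = (\<lambda>a. - (a ^ 2))"
definition G2 :: "real \<Rightarrow> real" where
  "G2 = (\<lambda>b. if b < 7/12 then 193/144 + 5/6 * b else 2 - (1 - b) ^ 2)"

lemma G2_lt: "b < 7/12 \<Longrightarrow> G2 b = 193/144 + 5/6 * b" by (simp add: G2_def)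
lemma G2_ge: "\<not> b < 7/12 \<Longrightarrow> G2 b = 2 - (1 - b) ^ 2" by (simp add: G2_def)

abbreviation "Qs \<equiv> ((5/12, 7/12) :: gen)"

lemma Qs_vals:
  "al G1 G2 Qs 1 = 95/144" "al G1 G2 Qs 2 = 95/144"
  "be G1 G2 Qs 1 = -5/6" "be G1 G2 Qs 2 = 7/6"
  by (simp_all add: al_def be_def pu_def dv_def rate_def G1_def G2_def power2_eq_square)

lemma Qs_vals1: "al G1 G2 Qs (Suc 0) = 95/144" "be G1 G2 Qs (Suc 0) = -5/6"
  using Qs_vals by simp_all

lemma rate_G: "rate G1 G2 Q 1 = - (fst Q * fst Q)" "rate G1 G2 Q (Suc 0) = - (fst Q * fst Q)" "rate G1 G2 Q 2 = G2 (snd Q)"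
  by (simp_all add: rate_def G1_def power2_eq_square)

lemma Qs_dv: "dv i (al G1 G2 Qs) = 0" "dv 1 (be G1 G2 Qs) = 2" "dv 2 (be G1 G2 Qs) = -2" "dv (Suc 0) (be G1 G2 Qs) = 2"
  by (simp_all add: dv_def Qs_vals Qs_vals1)

lemma D1_Qs_1: "D1 G1 G2 Q 1 Qs = - ((fst Q - 5/12)^2)"
  by (simp add: D1_def Qs_vals Qs_vals1 Qs_dv rate_G qv_def Mf_def Lf_def power2_eq_square algebra_simps)

lemma D1_Qs_2: "D1 G1 G2 Q 2 Qs = G2 (snd Q) - 193/144 - 5/6 * snd Q"
  by (simp add: D1_def Qs_vals Qs_vals1 Qs_dv rate_G qv_def Mf_def Lf_def algebra_simps)

lemma D1_Qs_2_le: "D1 G1 G2 Q 2 Qs \<le> 0"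
proof -
  have "G2 (snd Q) - 193/144 - 5/6 * snd Q \<le> 0"
  proof (cases "snd Q < 7/12")
    case True then show ?thesis by (simp add: G2_def)
  next
    case False
    then have "G2 (snd Q) - 193/144 - 5/6 * snd Q = - ((snd Q - 7/12)^2)"
      by (simp add: G2_def power2_eq_square algebra_simps)
    then show ?thesis by simp
  qed
  then show ?thesis by (simp add: D1_Qs_2)
qed

lemma D2_C:
  assumes "0 \<le> b" "b < 7/12"
  shows "D2 G1 G2 (5/12, b) 2 Qs = (7/12 - b)/12"
  using assms
  by (simp add: D2_def Qs_vals Qs_vals1 Qs_dv rate_G qv_def Mf_def Lf_def Nf_def dv_def G2_lt
      power2_eq_square algebra_simps)



definition pc :: "real \<Rightarrow> real" where "pc x = 2*x^3 + 9*x^2 + 383/72*x - 193/48"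

lemma alg_eq:
  fixes p q x :: real
  assumes "p \<noteq> 0" "q \<noteq> 0" "p = 1 + x" "q = 2 + x"
  shows "(2*x = 1/2*(1/p+1/q)*(x^2+193/144)) \<longleftrightarrow> 2*x*(2*p*q) = (p+q)*(x^2+193/144)"
  using assms(1,2) by (simp add: field_simps)

lemma eq_iff:
  assumes "x \<ge> 0"
  shows "(2*x = 1/2*(1/(1+x)+1/(2+x))*(x^2+193/144)) \<longleftrightarrow> pc x = 0"
proof -
  have p: "1+x \<noteq> 0" "2+x \<noteq> 0" using assms by auto
  have e: "2*x*(2*(1+x)*(2+x)) - ((1+x)+(2+x))*(x^2+193/144) = pc x"
    by (simp add: pc_def field_simps power2_eq_square power3_eq_cube)
  show ?thesis unfolding alg_eq[OF p refl refl] using e by linarith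
qed

lemma pc_mono:
  assumes "0 \<le> x" "x < y"
  shows "pc x < pc y"
proof -
  have "x^3 \<le> y^3" "x^2 \<le> y^2" using assms by (auto intro!: power_mono)
  then show ?thesis using assms unfolding pc_def by linarith
qed

lemma pc_root: "\<exists>x. 0 \<le> x \<and> x \<le> 1 \<and> pc x = 0"
proof -
  have "\<exists>x\<ge>0. x \<le> 1 \<and> pc x = 0"
    by (rule IVT) (auto simp: pc_def intro!: continuous_intros)
  then show ?thesis by blast
qed

lemma pc_root_gt:
  assumes "pc x = 0" "x \<ge> 0"
  shows "x > 5/12"
proof (rule ccontr)
  assume "\<not> x > 5/12"
  then have "pc x \<le> pc (5/12)"
  proof (cases "x = 5/12")
    case False
    then show ?thesis using pc_mono[of x "5/12"] assms \<open>\<not> x > 5/12\<close> by simp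
  next
    case True
    then show ?thesis by (simp only: True order_refl)
  qed
  moreover have "pc (5/12) < 0" by (simp add: pc_def power3_eq_cube power2_eq_square)
  ultimately show False using assms by simp
qed

lemma alg_M:
  fixes p q x :: real
  assumes "p \<noteq> 0" "q \<noteq> 0" "p = 1 + x" "q = 2 + x"
  shows "1/(2*p) + 1/q = 1 - x * (1/(2*p) + 1/(2*q))"
  using assms(1,2) apply (simp add: field_simps)
  using assms(3,4) apply (simp add: algebra_simps)
  done

lemma alg_N:
  fixes p q x :: real
  assumes "p \<noteq> 0" "q \<noteq> 0" "p = 1 + x" "q = 2 + x"
  shows "1/(2*p) + 2/q = 3/2 + x - 2*x*(1/(2*p) + 1/q) - x^2 * (1/(2*p) + 1/(2*q))"
  using assms(1,2) apply (simp add: field_simps power2_eq_square)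
  using assms(3,4) apply (simp add: algebra_simps)
  done

lemma Mf_eq: "x \<ge> 0 \<Longrightarrow> Mf x = 1 - x * Lf x"
  unfolding Mf_def Lf_def by (rule alg_M) auto

lemma Nf_eq: "x \<ge> 0 \<Longrightarrow> Nf x = 3/2 + x - 2*x*Mf x - x^2 * Lf x"
  unfolding Nf_def Mf_def Lf_def by (rule alg_N) auto



locale abar =
  fixes a :: real
  assumes a_gt: "a > 5/12"
    and a_eq: "Lf a * (a^2 + 193/144) = 2*a"
begin

lemma a_pos: "a > 0" using a_gt by simp

lemma dpos: "a^2 + 193/144 > 0" by (simp add: add_nonneg_pos)

lemma Lf_a: "Lf a = 2*a / (a^2 + 193/144)"
  using a_eq dpos by (simp add: field_simps)

lemma Mf_a: "Mf a = 1 - a * (2*a / (a^2 + 193/144))"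
  using Mf_eq[of a] a_pos Lf_a by simp

lemma Nf_a: "Nf a = 3/2 + a - 2*a*(1 - a * (2*a / (a^2 + 193/144))) - a^2 * (2*a / (a^2 + 193/144))"
  using Nf_eq[of a] a_pos Lf_a Mf_a by simp

lemma Qb_vals:
  "al G1 G2 (a,0) 1 = 193/144" "al G1 G2 (a,0) 2 = 193/144"
  "al G1 G2 (a,0) (Suc 0) = 193/144"
  "be G1 G2 (a,0) 1 = -(193/144 + a*a)" "be G1 G2 (a,0) (Suc 0) = -(193/144 + a*a)"
  "be G1 G2 (a,0) 2 = 0"
  using a_pos by (simp_all add: al_def be_def pu_def dv_def rate_G G2_lt)

lemma Qb_dv: "dv i (al G1 G2 (a,0)) = 0" "dv 1 (be G1 G2 (a,0)) = 193/144 + a*a"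
  "dv (Suc 0) (be G1 G2 (a,0)) = 193/144 + a*a" "dv 2 (be G1 G2 (a,0)) = -(193/144 + a*a)"
  by (simp_all add: dv_def Qb_vals)

lemma D1_b1: "D1 G1 G2 Q 1 (a,0) = - ((fst Q - a)^2)"
proof -
  have "D1 G1 G2 Q 1 (a,0) = - (fst Q * fst Q) - 193/144 + Mf a * (193/144 + a*a) + fst Q * (Lf a * (193/144 + a*a))"
    by (simp add: D1_def Qb_vals Qb_dv qv_def rate_G algebra_simps)
  also have "\<dots> = - (fst Q * fst Q) - 193/144 + (193/144 + a*a) - a * (Lf a * (a^2 + 193/144)) + fst Q * (Lf a * (a^2 + 193/144))"
    unfolding Mf_eq[OF less_imp_le[OF a_pos]] by (simp add: field_simps power2_eq_square)
  also have "\<dots> = - ((fst Q - a)^2)"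
    unfolding a_eq by (simp add: field_simps power2_eq_square)
  finally show ?thesis .
qed

lemma D1_b2: "D1 G1 G2 Q 2 (a,0) = G2 (snd Q) - 193/144 - 2*a* snd Q"
proof -
  have "D1 G1 G2 Q 2 (a,0) = G2 (snd Q) - 193/144 - snd Q * (Lf a * (a^2 + 193/144))"
    by (simp add: D1_def Qb_vals Qb_dv qv_def rate_G algebra_simps power2_eq_square)
  also have "\<dots> = G2 (snd Q) - 193/144 - 2*a* snd Q"
    unfolding a_eq by simp
  finally show ?thesis .
qed

lemma D2_b1: "D2 G1 G2 (a, y) 1 (a,0) = - a * (193/144 - G2 y + 2*a*y)"
proof -
  let ?d = "a^2 + 193/144"
  have "D2 G1 G2 (a, y) 1 (a,0) = 3/2*(a*a) + a*(G2 y + a*a) + 3/2*(193/144) - Nf a * (193/144 + a*a)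
     - a * (2 * Mf a * (193/144 + a*a)) - (a + y) * a * (Lf a * (193/144 + a*a))"
    by (simp add: D2_def Qb_vals Qb_dv qv_def rate_G dv_def algebra_simps)
  also have "\<dots> = 3/2*(a*a) + a*(G2 y + a*a) + 3/2*(193/144)
     - (3/2 + a - 2*a*(1 - a * Lf a) - a^2 * Lf a) * ?d
     - a * (2 * (1 - a * Lf a) * ?d) - (a + y) * a * (Lf a * ?d)"
    unfolding Nf_eq[OF less_imp_le[OF a_pos]] Mf_eq[OF less_imp_le[OF a_pos]] by (simp add: power2_eq_square algebra_simps)
  also have "\<dots> = 3/2*(a*a) + a*(G2 y + a*a) + 3/2*(193/144)
     - (3/2 - a) * ?d - a^2*(Lf a * ?d) - 2*a*?d + 2*a^2*(Lf a * ?d) - (a + y) * a * (Lf a * ?d)"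
    by (simp add: field_simps power2_eq_square)
  also have "\<dots> = - a * (193/144 - G2 y + 2*a*y)"
    unfolding a_eq by (simp add: field_simps power2_eq_square)
  finally show ?thesis .
qed

end


lemma Dlim:
  assumes "admissible Q" "admissible Q'" "i \<in> states"
  shows "((\<lambda>e. (F dl g1 g2 i Q' - Fsw dl g1 g2 i Q e Q') / e) \<longlongrightarrow> - D1 g1 g2 Q i Q') (at_right 0)"
proof -
  have lim: "((\<lambda>e. - (es (CS g1 g2 Q i Q') e / e)) \<longlongrightarrow> - D1 g1 g2 Q i Q') (at_right 0)"
    using es_lim[OF h_0[OF assms]] h_1[OF assms] by (intro tendsto_minus) simp
  have ev: "eventually (\<lambda>e. - (es (CS g1 g2 Q i Q') e / e) = (F dl g1 g2 i Q' - Fsw dl g1 g2 i Q e Q') / e) (at_right 0)"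
    using eventually_at_right_less[of "0::real"]
  proof eventually_elim
    case (elim e)
    then show ?case using h_rep[OF assms, of e g1 g2] by (simp add: field_simps)
  qed
  show ?thesis by (rule Lim_transform_eventually[OF lim ev])
qed

lemma ev_ex:
  assumes "eventually P (at_right (0::real))"
  shows "\<exists>\<epsilon>>0. \<forall>\<epsilon>'. 0 < \<epsilon>' \<and> \<epsilon>' \<le> \<epsilon> \<longrightarrow> P \<epsilon>'"
proof -
  obtain b where b: "b > 0" "\<And>y. y > 0 \<Longrightarrow> y < b \<Longrightarrow> P y"
    using assms unfolding eventually_at_right_field by auto
  show ?thesis by (rule exI[of _ "b/2"]) (use b in auto)
qed

lemma adm_Qs: "admissible Qs" by (simp add: admissible_def)

lemma states_cases: "i \<in> states \<Longrightarrow> i = 1 \<or> i = 2" by (simp add: states_def)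

lemma weakA: "weak_eq dl G1 G2 Qs"
  unfolding weak_eq_def
proof (intro allI impI)
  fix Q i assume adm: "admissible Q" and i: "i \<in> states"
  have "D1 G1 G2 Q i Qs \<le> 0"
  proof (cases "i = 1")
    case True
    then show ?thesis using D1_Qs_1[of Q] by simp
  next
    case False
    then have "i = 2" using states_cases[OF i] by simp
    then show ?thesis using D1_Qs_2_le[of Q] by simp
  qed
  moreover have "((\<lambda>e. ereal ((F dl G1 G2 i Qs - Fsw dl G1 G2 i Q e Qs) / e)) \<longlongrightarrow> ereal (- D1 G1 G2 Q i Qs)) (at_right 0)"
    using Dlim[OF adm adm_Qs i] by (simp add: tendsto_ereal)
  then have "Liminf (at_right 0) (\<lambda>e. ereal ((F dl G1 G2 i Qs - Fsw dl G1 G2 i Q e Qs) / e)) = ereal (- D1 G1 G2 Q i Qs)"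
    by (intro lim_imp_Liminf) auto
  ultimately show "Liminf (at_right 0) (\<lambda>e. ereal ((F dl G1 G2 i Qs - Fsw dl G1 G2 i Q e Qs) / e)) \<ge> 0"
    by simp
qed

lemma partC:
  assumes "0 \<le> b" "b < 7/12"
  shows "eventually (\<lambda>e. F dl G1 G2 2 Qs < Fsw dl G1 G2 2 (5/12, b) e Qs) (at_right 0)"
proof -
  have adm: "admissible (5/12, b)" using assms by (simp add: admissible_def)
  have i: "(2::nat) \<in> states" by (simp add: states_def)
  have "D1 G1 G2 (5/12, b) 2 Qs = 0" using assms by (simp add: D1_Qs_2 G2_lt)
  then have "eventually (\<lambda>e. es (CS G1 G2 (5/12, b) 2 Qs) e > 0) (at_right 0)"
    using es_pos h_0[OF adm adm_Qs i] h_1[OF adm adm_Qs i] h_2[OF adm adm_Qs i] D2_C[OF assms] assms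
    by simp
  then show ?thesis using eventually_at_right_less[of "0::real"]
  proof eventually_elim
    case (elim e)
    then show ?case using h_rep[OF adm adm_Qs i, of e G1 G2] by simp
  qed
qed

lemma notStrong: "\<not> strong_eq dl G1 G2 Qs"
proof
  assume st: "strong_eq dl G1 G2 Qs"
  have adm: "admissible (5/12, 0)" by (simp add: admissible_def)
  have i: "(2::nat) \<in> states" by (simp add: states_def)
  obtain \<epsilon> where e: "\<epsilon> > 0" "\<And>\<epsilon>'. 0 < \<epsilon>' \<Longrightarrow> \<epsilon>' \<le> \<epsilon> \<Longrightarrow> F dl G1 G2 2 Qs \<ge> Fsw dl G1 G2 2 (5/12, 0) \<epsilon>' Qs"
    using st[unfolded strong_eq_def, rule_format, OF adm i] by blast
  obtain b where b: "b > 0" "\<And>y. y > 0 \<Longrightarrow> y < b \<Longrightarrow> F dl G1 G2 2 Qs < Fsw dl G1 G2 2 (5/12, 0) y Qs"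
    using partC[of 0] unfolding eventually_at_right_field by auto
  have "F dl G1 G2 2 Qs < Fsw dl G1 G2 2 (5/12, 0) (min \<epsilon> b / 2) Qs" using b e by auto
  moreover have "F dl G1 G2 2 Qs \<ge> Fsw dl G1 G2 2 (5/12, 0) (min \<epsilon> b / 2) Qs" using b e by auto
  ultimately show False by simp
qed



context abar
begin

lemma adm_Qb: "admissible (a,0)" using a_pos by (simp add: admissible_def)

lemma pu_Qb: "pu (a,0) 1 = 1" "pu (a,0) (Suc 0) = 1" using a_pos by (simp_all add: pu_def)

lemma zero1: "es (CS G1 G2 (a,0) 1 (a,0)) e = 0"
proof -
  have i: "(1::nat) \<in> states" by (simp add: states_def)
  have p: "1 + a \<noteq> 0" "2 + a \<noteq> 0" using a_pos by auto
  show ?thesis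
    unfolding CS_def cs_def F_rep[OF adm_Qb i]
    using p by (simp add: Qb_vals Qb_dv pu_Qb K0_def add.commute)
qed

lemma zero2:
  assumes "snd Q = 0"
  shows "es (CS G1 G2 Q 2 (a,0)) e = 0"
proof -
  have i: "(2::nat) \<in> states" by (simp add: states_def)
  have pu: "pu Q 2 = 0" using assms by (simp add: pu_def)
  have v: "al G1 G2 Q 2 = 193/144" "be G1 G2 Q 2 = 0"
    using assms by (simp_all add: al_def be_def pu rate_G G2_lt)
  show ?thesis
    unfolding CS_def cs_def F_rep[OF adm_Qb i]
    by (simp add: Qb_vals Qb_dv pu v K0_def)
qed

lemma Dpos:
  assumes "y > 0"
  shows "193/144 - G2 y + 2*a*y > 0"
proof (cases "y < 7/12")
  case True
  have "(2*a - 5/6) * y > 0" using a_gt assms by (intro mult_pos_pos) auto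
  then show ?thesis using True by (simp add: G2_lt algebra_simps)
next
  case False
  have h: "2*a*y > 5/6*y" using a_gt assms by (intro mult_strict_right_mono) auto
  have eq: "193/144 - (2 - (1 - y)^2) + 5/6*y = (y - 7/12)^2"
    by (simp add: power2_eq_square field_simps)
  have sq: "(y - 7/12)^2 \<ge> 0" by simp
  have g: "G2 y = 2 - (1 - y)^2" using False by (simp add: G2_ge)
  show ?thesis using h eq sq g by linarith
qed

lemma strongD: "strong_eq dl G1 G2 (a,0)"
  unfolding strong_eq_def
proof (intro allI impI)
  fix Q i assume adm: "admissible Q" and i: "i \<in> states"
  have ev: "eventually (\<lambda>e. es (CS G1 G2 Q i (a,0)) e \<le> 0) (at_right 0)"
  proof (cases "i = 1")
    case True
    then have i1: "i = 1" .
    show ?thesis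
    proof (cases "fst Q = a")
      case False
      have "D1 G1 G2 Q i (a,0) < 0" using False i1 D1_b1[of Q] by simp
      then show ?thesis
        using es_neg[OF h_0[OF adm adm_Qb i], of G1 G2] h_1[OF adm adm_Qb i, of G1 G2]
        by (auto elim: eventually_mono)
    next
      case True
      obtain y where Q: "Q = (a, y)" using True by (metis prod.collapse)
      show ?thesis
      proof (cases "y = 0")
        case True
        then show ?thesis using Q i1 zero1 by simp
      next
        case False
        then have "y > 0" using adm Q by (simp add: admissible_def)
        then have "D2 G1 G2 Q i (a,0) < 0"
          using Dpos[of y] D2_b1[of y] Q i1 a_pos by (simp add: mult_pos_pos)
        moreover have "D1 G1 G2 Q i (a,0) = 0" using D1_b1[of Q] Q i1 by simp
        ultimately show ?thesis
          using es_neg2[OF h_0[OF adm adm_Qb i], of G1 G2] h_1[OF adm adm_Qb i, of G1 G2] h_2[OF adm adm_Qb i, of G1 G2]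
          by (auto elim: eventually_mono)
      qed
    qed
  next
    case False
    then have i2: "i = 2" using states_cases[OF i] by simp
    show ?thesis
    proof (cases "snd Q = 0")
      case True
      then show ?thesis using zero2 i2 by simp
    next
      case False
      then have "snd Q > 0" using adm by (simp add: admissible_def)
      then have "D1 G1 G2 Q i (a,0) < 0" using Dpos[of "snd Q"] D1_b2[of Q] i2 by simp
      then show ?thesis
        using es_neg[OF h_0[OF adm adm_Qb i], of G1 G2] h_1[OF adm adm_Qb i, of G1 G2]
        by (auto elim: eventually_mono)
    qed
  qed
  have "eventually (\<lambda>e. F dl G1 G2 i (a,0) \<ge> Fsw dl G1 G2 i Q e (a,0)) (at_right 0)"
    using ev eventually_at_right_less[of "0::real"]
  proof eventually_elim
    case (elim e)
    then show ?case using h_rep[OF adm adm_Qb i, of e G1 G2] by simp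
  qed
  then show "\<exists>\<epsilon>>0. \<forall>\<epsilon>'. 0 < \<epsilon>' \<and> \<epsilon>' \<le> \<epsilon> \<longrightarrow> F dl G1 G2 i (a,0) \<ge> Fsw dl G1 G2 i Q \<epsilon>' (a,0)"
    by (rule ev_ex)
qed

end


theorem mainTheorem13:
  fixes \<delta> g1 g2 :: "real \<Rightarrow> real"
  assumes d: "\<delta> = (\<lambda>t. exp (- t) / 2 + exp (- 2 * t) / 2)"
    and h1: "g1 = (\<lambda>a. - (a ^ 2))"
    and h2: "g2 = (\<lambda>b. if b < 7/12 then 193/144 + 5/6 * b else 2 - (1 - b) ^ 2)"
  shows "weak_eq \<delta> g1 g2 (5/12, 7/12)
       \<and> \<not> strong_eq \<delta> g1 g2 (5/12, 7/12)
       \<and> (\<forall>b. 0 \<le> b \<and> b < 7/12 \<longrightarrow>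
             (\<forall>\<^sub>F \<epsilon> in at_right 0. F \<delta> g1 g2 2 (5/12, 7/12) < Fsw \<delta> g1 g2 2 (5/12, b) \<epsilon> (5/12, 7/12)))
       \<and> (\<exists>a\<ge>0. 2 * a = 1/2 * (1 / (1 + a) + 1 / (2 + a)) * (a ^ 2 + 193/144)
             \<and> (\<forall>a'\<ge>0. 2 * a' = 1/2 * (1 / (1 + a') + 1 / (2 + a')) * (a' ^ 2 + 193/144) \<longrightarrow> a' = a)
             \<and> 2 * a \<ge> 5/6
             \<and> strong_eq \<delta> g1 g2 (a, 0))"
proof -
  have dd: "\<delta> = dl" using d by (simp add: fun_eq_iff dl_def)
  have g1e: "g1 = G1" using h1 by (simp add: G1_def)
  have g2e: "g2 = G2" using h2 by (simp add: G2_def)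
  obtain a where a: "0 \<le> a" "a \<le> 1" "pc a = 0" using pc_root by blast
  have agt: "a > 5/12" by (rule pc_root_gt[OF a(3) a(1)])
  have eqn: "2 * a = 1/2 * (1 / (1 + a) + 1 / (2 + a)) * (a ^ 2 + 193/144)"
    using eq_iff[OF a(1)] a(3) by simp
  have L: "Lf a = 1/2 * (1 / (1 + a) + 1 / (2 + a))" unfolding Lf_def by (simp add: ring_distribs)
  have Lfeq: "Lf a * (a^2 + 193/144) = 2*a" unfolding L by (rule eqn[symmetric])
  interpret abar a by unfold_locales (use agt Lfeq in auto)
  have uniq: "\<forall>a'\<ge>0. 2 * a' = 1/2 * (1 / (1 + a') + 1 / (2 + a')) * (a' ^ 2 + 193/144) \<longrightarrow> a' = a"
  proof (intro allI impI)
    fix a' :: real assume h: "a' \<ge> 0" "2 * a' = 1/2 * (1 / (1 + a') + 1 / (2 + a')) * (a' ^ 2 + 193/144)"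
    then have p: "pc a' = 0" using eq_iff[OF h(1)] by simp
    show "a' = a"
    proof (rule linorder_cases[of a' a])
      assume "a' < a" then have "pc a' < pc a" using pc_mono h(1) by blast
      then show ?thesis using p a(3) by simp
    next
      assume "a < a'" then have "pc a < pc a'" using pc_mono a(1) by blast
      then show ?thesis using p a(3) by simp
    qed
  qed
  have ex: "\<exists>a\<ge>0. 2 * a = 1/2 * (1 / (1 + a) + 1 / (2 + a)) * (a ^ 2 + 193/144)
             \<and> (\<forall>a'\<ge>0. 2 * a' = 1/2 * (1 / (1 + a') + 1 / (2 + a')) * (a' ^ 2 + 193/144) \<longrightarrow> a' = a)
             \<and> 2 * a \<ge> 5/6
             \<and> strong_eq dl G1 G2 (a, 0)"
    using a(1) eqn uniq agt strongD by (intro exI[of _ a]) auto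
  show ?thesis
    unfolding dd g1e g2e using weakA notStrong partC ex by blast
qed

end
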